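(* Let $G$ be an $n$-resource selection game. Then $h^s_j=h^{s'}_j$ for every $j\in[n]$ and every two Nash equilibria $s,s'$ of $G$.
   Context: Write $[n]=\{1,\ldots,n\}$ and $\mathbb{R}_{\ge}=[0,\infty)$. An $n$-resource selection game is a pair $G=\bigl((f_j)_{j=1}^n;(\mu^{R})_{\emptyset\ne R\subseteq[n]}\bigr)$ where each $f_j:\mathbb{R}_{\ge}\to\mathbb{R}$ is nondecreasing (not necessarily continuous) and $\mu^R\in\mathbb{R}_{\ge}$ for every nonempty $R\subseteq[n]$. A consumption profile is a map $s$ assigning to each nonempty $R\subseteq[n]$ a vector $s(R)\in\mathbb{R}_{\ge}^{[n]}$ with $s_j(R)=0$ for $j\notin R$ and $\sum_{j}s_j(R)=\mu^R$. The load of resource $j$ is $\mu^s_j=\sum_{R}s_j(R)$ and its cost is $h^s_j=f_j(\mu^s_j)$. $s$ is a Nash equilibrium if for every nonempty $R$, every $k$ with $s_k(R)>0$ and every $j\in R$, $h^s_k\le h^s_j$. *)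

theory Defs
  imports Complex_Main
begin

definition resource_sets :: "nat \<Rightarrow> nat set set" where
  "resource_sets n = {R. R \<subseteq> {1..n} \<and> R \<noteq> {}}"

definition is_rs_game :: "nat \<Rightarrow> (nat \<Rightarrow> real \<Rightarrow> real) \<Rightarrow> (nat set \<Rightarrow> real) \<Rightarrow> bool" where
  "is_rs_game n f mu \<longleftrightarrow>
     (\<forall>j\<in>{1..n}. \<forall>x y. 0 \<le> x \<longrightarrow> x \<le> y \<longrightarrow> f j x \<le> f j y) \<and>
     (\<forall>R\<in>resource_sets n. 0 \<le> mu R)"

definition is_consumption_profile :: "nat \<Rightarrow> (nat set \<Rightarrow> real) \<Rightarrow> (nat set \<Rightarrow> nat \<Rightarrow> real) \<Rightarrow> bool" where
  "is_consumption_profile n mu s \<longleftrightarrow>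
     (\<forall>R\<in>resource_sets n.
        (\<forall>j\<in>{1..n}. 0 \<le> s R j) \<and>
        (\<forall>j\<in>{1..n}. j \<notin> R \<longrightarrow> s R j = 0) \<and>
        (\<Sum>j\<in>{1..n}. s R j) = mu R)"

definition load :: "nat \<Rightarrow> (nat set \<Rightarrow> nat \<Rightarrow> real) \<Rightarrow> nat \<Rightarrow> real" where
  "load n s j = (\<Sum>R\<in>resource_sets n. s R j)"

definition cost :: "nat \<Rightarrow> (nat \<Rightarrow> real \<Rightarrow> real) \<Rightarrow> (nat set \<Rightarrow> nat \<Rightarrow> real) \<Rightarrow> nat \<Rightarrow> real" where
  "cost n f s j = f j (load n s j)"

definition is_nash_eq :: "nat \<Rightarrow> (nat \<Rightarrow> real \<Rightarrow> real) \<Rightarrow> (nat set \<Rightarrow> real) \<Rightarrow> (nat set \<Rightarrow> nat \<Rightarrow> real) \<Rightarrow> bool" where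
  "is_nash_eq n f mu s \<longleftrightarrow>
     is_consumption_profile n mu s \<and>
     (\<forall>R\<in>resource_sets n. \<forall>k\<in>{1..n}. \<forall>j\<in>R.
        0 < s R k \<longrightarrow> cost n f s k \<le> cost n f s j)"

end

theory Submission
  imports Defs
begin

lemma fin_rs: "finite (resource_sets n)"
proof -
  have "resource_sets n \<subseteq> Pow {1..n}" by (auto simp: resource_sets_def)
  thus ?thesis by (rule finite_subset) simp
qed

lemma load_nonneg:
  assumes "is_consumption_profile n mu s" "j \<in> {1..n}"
  shows "0 \<le> load n s j"
  unfolding load_def using assms by (auto simp: is_consumption_profile_def intro!: sum_nonneg)

lemma key:
  assumes g: "is_rs_game n f mu"
    and ns: "is_nash_eq n f mu s"
    and ns': "is_nash_eq n f mu s'"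
  shows "{j\<in>{1..n}. cost n f s j < cost n f s' j} = {}"
proof (rule ccontr)
  define A where "A = {j\<in>{1..n}. cost n f s j < cost n f s' j}"
  assume ne: "{j\<in>{1..n}. cost n f s j < cost n f s' j} \<noteq> {}"
  hence Ane: "A \<noteq> {}" by (simp add: A_def)
  have finA: "finite A" unfolding A_def by simp
  have Asub: "A \<subseteq> {1..n}" unfolding A_def by auto
  have cp: "is_consumption_profile n mu s" and cp': "is_consumption_profile n mu s'"
    using ns ns' by (auto simp: is_nash_eq_def)
  have lt: "load n s j < load n s' j" if "j \<in> A" for j
  proof (rule ccontr)
    assume "\<not> load n s j < load n s' j"
    hence "load n s' j \<le> load n s j" by simp
    moreover have "0 \<le> load n s' j" using load_nonneg[OF cp'] that Asub by auto
    moreover have "j \<in> {1..n}" using that Asub by auto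
    ultimately have "f j (load n s' j) \<le> f j (load n s j)"
      using g by (auto simp: is_rs_game_def)
    thus False using that by (auto simp: A_def cost_def)
  qed
  have strict: "(\<Sum>j\<in>A. load n s j) < (\<Sum>j\<in>A. load n s' j)"
    using sum_strict_mono[OF finA Ane lt] by simp
  have le: "(\<Sum>j\<in>A. s' R j) \<le> (\<Sum>j\<in>A. s R j)" if R: "R \<in> resource_sets n" for R
  proof (cases "\<exists>k\<in>A. 0 < s' R k")
    case False
    hence "(\<Sum>j\<in>A. s' R j) \<le> 0" by (intro sum_nonpos) (auto simp: not_less)
    moreover have "0 \<le> (\<Sum>j\<in>A. s R j)"
      using cp R Asub by (auto simp: is_consumption_profile_def intro!: sum_nonneg)
    ultimately show ?thesis by linarith
  next
    case True
    then obtain k where kA: "k \<in> A" and kpos: "0 < s' R k" by blast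
    have kn: "k \<in> {1..n}" using kA Asub by auto
    have kR: "k \<in> R" using cp' R kn kpos unfolding is_consumption_profile_def by fastforce
    have zero: "s R i = 0" if i: "i \<in> {1..n} - A" for i
    proof (rule ccontr)
      assume "s R i \<noteq> 0"
      moreover have "0 \<le> s R i" using cp R i unfolding is_consumption_profile_def by blast
      ultimately have ipos: "0 < s R i" by linarith
      have iR: "i \<in> R" using cp R i ipos unfolding is_consumption_profile_def by fastforce
      have "cost n f s i \<le> cost n f s k" using ns R i kR ipos by (auto simp: is_nash_eq_def)
      moreover have "cost n f s' k \<le> cost n f s' i" using ns' R kn iR kpos
        by (auto simp: is_nash_eq_def)
      moreover have "cost n f s k < cost n f s' k" using kA by (simp add: A_def)
      moreover have "cost n f s' i \<le> cost n f s i" using i by (auto simp: A_def)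
      ultimately show False by linarith
    qed
    have "(\<Sum>j\<in>{1..n}. s R j) = (\<Sum>j\<in>A. s R j) + (\<Sum>j\<in>{1..n} - A. s R j)"
      using Asub by (simp add: sum.subset_diff)
    also have "(\<Sum>j\<in>{1..n} - A. s R j) = 0" using zero by simp
    finally have e1: "(\<Sum>j\<in>A. s R j) = mu R" using cp R by (simp add: is_consumption_profile_def)
    have "(\<Sum>j\<in>{1..n}. s' R j) = (\<Sum>j\<in>A. s' R j) + (\<Sum>j\<in>{1..n} - A. s' R j)"
      using Asub by (simp add: sum.subset_diff)
    moreover have "0 \<le> (\<Sum>j\<in>{1..n} - A. s' R j)"
      using cp' R by (auto simp: is_consumption_profile_def intro!: sum_nonneg)
    moreover have "(\<Sum>j\<in>{1..n}. s' R j) = mu R" using cp' R by (simp add: is_consumption_profile_def)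
    ultimately show ?thesis using e1 by linarith
  qed
  have "(\<Sum>j\<in>A. load n s' j) = (\<Sum>R\<in>resource_sets n. \<Sum>j\<in>A. s' R j)"
    unfolding load_def by (rule sum.swap)
  also have "\<dots> \<le> (\<Sum>R\<in>resource_sets n. \<Sum>j\<in>A. s R j)" by (rule sum_mono) (rule le)
  also have "\<dots> = (\<Sum>j\<in>A. load n s j)"
    unfolding load_def by (rule sum.swap)
  finally show False using strict by linarith
qed

theorem mainTheorem2:
  fixes n :: nat and f :: "nat \<Rightarrow> real \<Rightarrow> real" and mu :: "nat set \<Rightarrow> real"
    and s s' :: "nat set \<Rightarrow> nat \<Rightarrow> real"
  assumes "is_rs_game n f mu"
    and "is_nash_eq n f mu s"
    and "is_nash_eq n f mu s'"
  shows "\<forall>j\<in>{1..n}. cost n f s j = cost n f s' j"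
proof
  fix j assume j: "j \<in> {1..n}"
  have "\<not> cost n f s j < cost n f s' j" using key[OF assms(1,2,3)] j by blast
  moreover have "\<not> cost n f s' j < cost n f s j" using key[OF assms(1,3,2)] j by blast
  ultimately show "cost n f s j = cost n f s' j" by linarith
qed

end
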